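(* Let $g$ be the pp-wave metric $ds^2=H(u,x^1,x^2)\,du^2+2\,du\,dv+(dx^1)^2+(dx^2)^2$, $0<b<1$, $m>0$, and consider the Finslerian pp-wave geodesic Lagrangian $$L=-\frac{1}{2n}\,\dot u^{2b}\left(-H\dot u^2-2\dot u\dot v-\delta_{ij}\dot x^i\dot x^j\right)^{1-b}-\frac{m^2}{2}n .$$ Along any solution of its Euler–Lagrange equations with $\dot u>0$ and $\mathcal G:=-H\dot u^2-2\dot u\dot v-\delta_{ij}\dot x^i\dot x^j>0$, the momentum $p_v=\partial L/\partial\dot v=(1-b)\dot u^{1+2b}\mathcal G^{-b}/n$ is constant, equal to some $\pi_v>0$, and $\mathcal G/\dot u^2$ equals the constant $$M_b^2=\left[\frac{(1-b)^2m^2}{\pi_v^2}\right]^{\frac{1}{1+b}} .$$ Moreover, if $\Upsilon$ is any vector field satisfying $\mathcal L_\Upsilon\left(g_{\mu\nu}-\frac{b}{1-b}M_b^2K_{\mu\nu}\right)=2\Omega(\mathrm x)\left(g_{\mu\nu}+M_b^2K_{\mu\nu}\right)$ with $K=du\otimes du$ and this value of $M_b^2$, then $I=\Upsilon^\mu\,\partial L/\partial\dot{\mathrm x}^\mu$ is constant along such a solution.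
   Context: Coordinates $(u,v,x^1,x^2)$, $i,j=1,2$, dots denote $d/d\lambda$, and $n(\lambda)>0$ is the einbein, varied independently (its Euler–Lagrange equation gives $n=\frac{1}{m}\dot u^{b}\mathcal G^{(1-b)/2}$). Here $\mathcal K=K_{\mu\nu}\dot{\mathrm x}^\mu\dot{\mathrm x}^\nu=\dot u^2$, so $M_b^{-2}=\mathcal K/\mathcal G$. *)

theory Defs
  imports "HOL-Analysis.Analysis"
begin

text \<open>Coordinates: a point is x :: real^4 with x$1 = u, x$2 = v, x$3 = x^1, x$4 = x^2.
  The pp-wave profile H depends on (u, x^1, x^2).\<close>

definition Hat :: "(real \<Rightarrow> real \<Rightarrow> real \<Rightarrow> real) \<Rightarrow> real^4 \<Rightarrow> real" where
  "Hat H x = H (x$1) (x$3) (x$4)"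

definition ppg :: "(real \<Rightarrow> real \<Rightarrow> real \<Rightarrow> real) \<Rightarrow> real^4 \<Rightarrow> 4 \<Rightarrow> 4 \<Rightarrow> real" where
  "ppg H x i j =
     (if i = 1 \<and> j = 1 then Hat H x
      else if (i = 1 \<and> j = 2) \<or> (i = 2 \<and> j = 1) then 1
      else if (i = 3 \<and> j = 3) \<or> (i = 4 \<and> j = 4) then 1
      else 0)"

definition Kdu :: "real^4 \<Rightarrow> 4 \<Rightarrow> 4 \<Rightarrow> real" where
  "Kdu x i j = (if i = 1 \<and> j = 1 then 1 else 0)"

definition Gpp :: "(real \<Rightarrow> real \<Rightarrow> real \<Rightarrow> real) \<Rightarrow> real^4 \<Rightarrow> real^4 \<Rightarrow> real" where
  "Gpp H x xd = - Hat H x * (xd$1)^2 - 2 * (xd$1) * (xd$2) - (xd$3)^2 - (xd$4)^2"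

definition Lag :: "real \<Rightarrow> real \<Rightarrow> (real \<Rightarrow> real \<Rightarrow> real \<Rightarrow> real) \<Rightarrow> real^4 \<Rightarrow> real^4 \<Rightarrow> real \<Rightarrow> real" where
  "Lag b m H x xd n =
     - (1 / (2 * n)) * (xd$1) powr (2 * b) * (Gpp H x xd) powr (1 - b) - m^2 / 2 * n"

definition dL_dxd :: "real \<Rightarrow> real \<Rightarrow> (real \<Rightarrow> real \<Rightarrow> real \<Rightarrow> real) \<Rightarrow> 4 \<Rightarrow> real^4 \<Rightarrow> real^4 \<Rightarrow> real \<Rightarrow> real" where
  "dL_dxd b m H \<mu> x xd n = deriv (\<lambda>s. Lag b m H x (xd + s *\<^sub>R axis \<mu> 1) n) 0"

definition dL_dx :: "real \<Rightarrow> real \<Rightarrow> (real \<Rightarrow> real \<Rightarrow> real \<Rightarrow> real) \<Rightarrow> 4 \<Rightarrow> real^4 \<Rightarrow> real^4 \<Rightarrow> real \<Rightarrow> real" where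
  "dL_dx b m H \<mu> x xd n = deriv (\<lambda>s. Lag b m H (x + s *\<^sub>R axis \<mu> 1) xd n) 0"

definition dL_dn :: "real \<Rightarrow> real \<Rightarrow> (real \<Rightarrow> real \<Rightarrow> real \<Rightarrow> real) \<Rightarrow> real^4 \<Rightarrow> real^4 \<Rightarrow> real \<Rightarrow> real" where
  "dL_dn b m H x xd n = deriv (\<lambda>s. Lag b m H x xd s) n"

definition EL_solution ::
  "real \<Rightarrow> real \<Rightarrow> (real \<Rightarrow> real \<Rightarrow> real \<Rightarrow> real) \<Rightarrow> real set \<Rightarrow>
   (real \<Rightarrow> real^4) \<Rightarrow> (real \<Rightarrow> real^4) \<Rightarrow> (real \<Rightarrow> real) \<Rightarrow> bool" where
  "EL_solution b m H J \<gamma> gd n \<longleftrightarrow>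
     (\<forall>t\<in>J. (\<gamma> has_vector_derivative gd t) (at t)) \<and>
     (\<forall>t\<in>J. \<forall>\<mu>. ((\<lambda>s. dL_dxd b m H \<mu> (\<gamma> s) (gd s) (n s))
                   has_real_derivative dL_dx b m H \<mu> (\<gamma> t) (gd t) (n t)) (at t)) \<and>
     (\<forall>t\<in>J. dL_dn b m H (\<gamma> t) (gd t) (n t) = 0)"

definition pd :: "(real^4 \<Rightarrow> real) \<Rightarrow> 4 \<Rightarrow> real^4 \<Rightarrow> real" where
  "pd f \<nu> x = deriv (\<lambda>s. f (x + s *\<^sub>R axis \<nu> 1)) 0"

definition lie2 :: "(real^4 \<Rightarrow> real^4) \<Rightarrow> (real^4 \<Rightarrow> 4 \<Rightarrow> 4 \<Rightarrow> real) \<Rightarrow> real^4 \<Rightarrow> 4 \<Rightarrow> 4 \<Rightarrow> real" where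
  "lie2 Y T x \<mu> \<nu> =
     (\<Sum>\<rho>\<in>UNIV. Y x $ \<rho> * pd (\<lambda>y. T y \<mu> \<nu>) \<rho> x)
   + (\<Sum>\<rho>\<in>UNIV. T x \<rho> \<nu> * pd (\<lambda>y. Y y $ \<rho>) \<mu> x)
   + (\<Sum>\<rho>\<in>UNIV. T x \<mu> \<rho> * pd (\<lambda>y. Y y $ \<rho>) \<nu> x)"

end

theory Submission
  imports Defs
begin


lemma dir_deriv:
  assumes "(f has_derivative D) (at x)"
  shows "((\<lambda>s. f (x + s *\<^sub>R e)) has_real_derivative D e) (at 0)"
proof -
  have l: "linear D" using assms has_derivative_linear by blast
  have "((\<lambda>s. x + s *\<^sub>R e) has_derivative (\<lambda>s. s *\<^sub>R e)) (at 0)"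
    by (auto intro!: derivative_eq_intros)
  moreover have "(f has_derivative D) (at (x + 0 *\<^sub>R e))" using assms by simp
  ultimately have "((\<lambda>s. f (x + s *\<^sub>R e)) has_derivative (\<lambda>s. D (s *\<^sub>R e))) (at 0)"
    by (rule has_derivative_compose)
  moreover have "(\<lambda>s. D (s *\<^sub>R e)) = (*) (D e)"
    using linear_scale[OF l] by (auto simp: fun_eq_iff)
  ultimately show ?thesis by (simp add: has_field_derivative_def)
qed

lemma dir_deriv_comp:
  fixes f :: "real^4 \<Rightarrow> real^4"
  assumes "(f has_derivative D) (at x)"
  shows "((\<lambda>s. f (x + s *\<^sub>R e) $ r) has_real_derivative D e $ r) (at 0)"
proof -
  have "((\<lambda>y. f y $ r) has_derivative (\<lambda>h. D h $ r)) (at x)"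
    using assms bounded_linear.has_derivative[OF bounded_linear_vec_nth] by blast
  from dir_deriv[OF this] show ?thesis .
qed

lemma powr_m1: "0 < (x::real) \<Longrightarrow> x powr (a - 1) = x powr a / x"
  by (simp add: powr_diff)

lemma dLag_dxd_dir:
  fixes x w e :: "real^4" and b m n :: real and H :: "real \<Rightarrow> real \<Rightarrow> real \<Rightarrow> real"
  assumes w1: "0 < w$1" and G: "0 < Gpp H x w" and n: "n \<noteq> 0"
  defines "F \<equiv> (w$1) powr (2*b) * (Gpp H x w) powr (1-b)"
  defines "gwe \<equiv> Hat H x*w$1*e$1 + e$1*w$2 + w$1*e$2 + w$3*e$3 + w$4*e$4"
  shows "((\<lambda>s. Lag b m H x (w + s *\<^sub>R e) n) has_real_derivative
     (F/n)*((1-b)*gwe/Gpp H x w - b*e$1/w$1)) (at 0)"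
proof -
  let ?G = "\<lambda>s. Gpp H x (w + s *\<^sub>R e)"
  let ?U = "\<lambda>s. (w + s *\<^sub>R e)$1"
  have G0: "?G 0 = Gpp H x w" by simp
  have dG: "(?G has_real_derivative -2*gwe) (at 0)"
    unfolding Gpp_def gwe_def
    by (auto intro!: derivative_eq_intros simp: algebra_simps)
  have dU: "(?U has_real_derivative e$1) (at 0)"
    by (auto intro!: derivative_eq_intros)
  have d1: "((\<lambda>s. ?U s powr (2*b)) has_real_derivative (2*b) * (w$1) powr (2*b - 1) * e$1) (at 0)"
    using DERIV_fun_powr[OF dU, of "2*b"] w1 by simp
  have d2: "((\<lambda>s. ?G s powr (1-b)) has_real_derivative (1-b) * (Gpp H x w) powr (1-b - 1) * (-2*gwe)) (at 0)"
    using DERIV_fun_powr[OF dG, of "1-b"] G by simp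
  have D: "((\<lambda>s. Lag b m H x (w + s *\<^sub>R e) n) has_real_derivative
     - (1 / (2 * n)) * ((2*b) * (w$1) powr (2*b - 1) * e$1 * (Gpp H x w) powr (1-b)
        + (w$1) powr (2*b) * ((1-b) * (Gpp H x w) powr (1-b - 1) * (-2*gwe)))) (at 0)"
  proof -
    have "((\<lambda>s. - (1 / (2 * n)) * (?U s powr (2*b) * ?G s powr (1-b)) - m^2/2*n) has_real_derivative
       - (1 / (2 * n)) * ((2*b) * (w$1) powr (2*b - 1) * e$1 * ?G 0 powr (1-b)
        + ?U 0 powr (2*b) * ((1-b) * (Gpp H x w) powr (1-b - 1) * (-2*gwe))) - 0) (at 0)"
      by (intro DERIV_diff DERIV_cmult DERIV_const) (use DERIV_mult[OF d1 d2] in \<open>simp add: mult_ac\<close>)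
    then show ?thesis unfolding Lag_def by (simp add: mult.assoc)
  qed
  have e1: "(w$1) powr (2*b - 1) = (w$1) powr (2*b) / w$1"
    by (rule powr_m1[OF w1])
  have e2: "(Gpp H x w) powr (1-b - 1) = (Gpp H x w) powr (1-b) / Gpp H x w"
    by (rule powr_m1[OF G])
  show ?thesis unfolding F_def
    apply (rule DERIV_cong[OF D])
    unfolding e1 e2 using w1 G n by (simp add: field_simps)
qed

lemma dLag_dx_dir:
  fixes x w e :: "real^4" and b m n :: real and H :: "real \<Rightarrow> real \<Rightarrow> real \<Rightarrow> real"
  assumes w1: "0 < w$1" and G: "0 < Gpp H x w" and n: "n \<noteq> 0"
    and DH: "(Hat H has_derivative DH) (at x)"
  defines "F \<equiv> (w$1) powr (2*b) * (Gpp H x w) powr (1-b)"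
  shows "((\<lambda>s. Lag b m H (x + s *\<^sub>R e) w n) has_real_derivative
     (F/n)*(1-b)/(2*Gpp H x w)*(w$1)^2*DH e) (at 0)"
proof -
  let ?G = "\<lambda>s. Gpp H (x + s *\<^sub>R e) w"
  have dHH: "((\<lambda>s. Hat H (x + s *\<^sub>R e)) has_real_derivative DH e) (at 0)"
    by (rule dir_deriv[OF DH])
  have dG: "(?G has_real_derivative -((w$1)^2 * DH e)) (at 0)"
    unfolding Gpp_def
    by (auto intro!: derivative_eq_intros dHH simp: algebra_simps)
  have d2: "((\<lambda>s. ?G s powr (1-b)) has_real_derivative (1-b) * (Gpp H x w) powr (1-b - 1) * (-((w$1)^2 * DH e))) (at 0)"
    using DERIV_fun_powr[OF dG, of "1-b"] G by simp
  have D: "((\<lambda>s. Lag b m H (x + s *\<^sub>R e) w n) has_real_derivative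
     - (1 / (2 * n)) * ((w$1) powr (2*b) * ((1-b) * (Gpp H x w) powr (1-b - 1) * (-((w$1)^2 * DH e)))) - 0) (at 0)"
    unfolding Lag_def
    by (intro DERIV_diff DERIV_const) (use DERIV_cmult[OF d2, of "-(1/(2*n)) * w$1 powr (2*b)"] in \<open>simp add: mult_ac\<close>)
  have e2: "(Gpp H x w) powr (1-b - 1) = (Gpp H x w) powr (1-b) / Gpp H x w"
    by (rule powr_m1[OF G])
  show ?thesis unfolding F_def
    apply (rule DERIV_cong[OF D])
    unfolding e2 using w1 G n by (simp add: field_simps)
qed

lemma dLag_dn:
  fixes x w :: "real^4" and b m n :: real and H :: "real \<Rightarrow> real \<Rightarrow> real \<Rightarrow> real"
  assumes n: "n \<noteq> 0"
  defines "F \<equiv> (w$1) powr (2*b) * (Gpp H x w) powr (1-b)"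
  shows "dL_dn b m H x w n = F/(2*n^2) - m^2/2"
proof -
  have "((\<lambda>s. Lag b m H x w s) has_real_derivative F/(2*n^2) - m^2/2) (at n)"
    unfolding Lag_def F_def using n
    by (auto intro!: derivative_eq_intros simp: field_simps power2_eq_square)
  then show ?thesis unfolding dL_dn_def by (rule DERIV_imp_deriv)
qed

lemma vec_comp_deriv:
  fixes f :: "real \<Rightarrow> real^4"
  assumes "(f has_vector_derivative v) (at t)"
  shows "((\<lambda>s. f s $ i) has_real_derivative v $ i) (at t)"
proof -
  have "((\<lambda>s. f s $ i) has_derivative (\<lambda>h. (h *\<^sub>R v) $ i)) (at t)"
    using assms bounded_linear.has_derivative[OF bounded_linear_vec_nth]
    unfolding has_vector_derivative_def by blast
  moreover have "(\<lambda>h. (h *\<^sub>R v) $ i) = (*) (v $ i)" by (auto simp: fun_eq_iff)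
  ultimately show ?thesis by (simp add: has_field_derivative_def)
qed

lemma pd_Y:
  fixes Y :: "real^4 \<Rightarrow> real^4"
  assumes "(Y has_derivative DU) (at x)"
  shows "pd (\<lambda>y. Y y $ r) v x = DU (axis v 1) $ r"
  unfolding pd_def by (rule DERIV_imp_deriv[OF dir_deriv_comp[OF assms]])

lemma pd_Hat:
  assumes "(Hat H has_derivative DH) (at x)"
  shows "pd (\<lambda>y. ppg H y i j - c * Kdu y i j) r x = (if i = 1 \<and> j = 1 then DH (axis r 1) else 0)"
proof (cases "i = 1 \<and> j = 1")
  case True
  then have "(\<lambda>s. ppg H (x + s *\<^sub>R axis r 1) i j - c * Kdu (x + s *\<^sub>R axis r 1) i j)
     = (\<lambda>s. Hat H (x + s *\<^sub>R axis r 1) - c)" by (auto simp: ppg_def Kdu_def fun_eq_iff)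
  moreover have "((\<lambda>s. Hat H (x + s *\<^sub>R axis r 1) - c) has_real_derivative DH (axis r 1) - 0) (at 0)"
    by (intro DERIV_diff dir_deriv[OF assms] DERIV_const)
  ultimately show ?thesis using True unfolding pd_def by (simp add: DERIV_imp_deriv)
next
  case False
  then have "(\<lambda>s. ppg H (x + s *\<^sub>R axis r 1) i j - c * Kdu (x + s *\<^sub>R axis r 1) i j)
     = (\<lambda>s. ppg H x i j - c * Kdu x i j)" by (auto simp: ppg_def Kdu_def fun_eq_iff)
  then show ?thesis using False unfolding pd_def by auto
qed

lemma axis_comps:
  "axis (1::4) (1::real) $ 1 = 1" "axis (1::4) (1::real) $ 2 = 0" "axis (1::4) (1::real) $ 3 = 0" "axis (1::4) (1::real) $ 4 = 0"
  "axis (2::4) (1::real) $ 1 = 0" "axis (2::4) (1::real) $ 2 = 1" "axis (2::4) (1::real) $ 3 = 0" "axis (2::4) (1::real) $ 4 = 0"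
  "axis (3::4) (1::real) $ 1 = 0" "axis (3::4) (1::real) $ 2 = 0" "axis (3::4) (1::real) $ 3 = 1" "axis (3::4) (1::real) $ 4 = 0"
  "axis (4::4) (1::real) $ 1 = 0" "axis (4::4) (1::real) $ 2 = 0" "axis (4::4) (1::real) $ 3 = 0" "axis (4::4) (1::real) $ 4 = 1"
  by (simp_all add: axis_def)

lemma ppg_vals: "ppg H x 1 1 = Hat H x" "ppg H x 1 2 = 1" "ppg H x 2 1 = 1" "ppg H x 3 3 = 1" "ppg H x 4 4 = 1"
  "ppg H x 1 3 = 0" "ppg H x 1 4 = 0" "ppg H x 2 2 = 0" "ppg H x 2 3 = 0" "ppg H x 2 4 = 0"
  "ppg H x 3 1 = 0" "ppg H x 3 2 = 0" "ppg H x 3 4 = 0" "ppg H x 4 1 = 0" "ppg H x 4 2 = 0" "ppg H x 4 3 = 0"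
  by (simp_all add: ppg_def)

lemma chain_vec:
  fixes g :: "real \<Rightarrow> real^4" and Y :: "real^4 \<Rightarrow> real^4"
  assumes g: "(g has_vector_derivative v) (at t)" and Y: "(Y has_derivative DU) (at (g t))"
  shows "((\<lambda>s. Y (g s)) has_vector_derivative DU v) (at t)"
proof -
  have l: "linear DU" using Y has_derivative_linear by blast
  have "((\<lambda>s. Y (g s)) has_derivative (\<lambda>h. DU (h *\<^sub>R v))) (at t)"
    using has_derivative_compose[OF g[unfolded has_vector_derivative_def] Y] .
  moreover have "(\<lambda>h. DU (h *\<^sub>R v)) = (\<lambda>h. h *\<^sub>R DU v)"
    using linear_scale[OF l] by (auto simp: fun_eq_iff)
  ultimately show ?thesis by (simp add: has_vector_derivative_def)
qed

lemma dL_dxd_eq: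
  fixes x w :: "real^4" and b m n :: real and H :: "real \<Rightarrow> real \<Rightarrow> real \<Rightarrow> real"
  assumes w1: "0 < w$1" and G: "0 < Gpp H x w" and n: "n \<noteq> 0"
  shows "dL_dxd b m H \<mu> x w n = ((w$1) powr (2*b) * (Gpp H x w) powr (1-b)/n)*((1-b)*
     (Hat H x*w$1*axis \<mu> 1$1 + axis \<mu> 1$1*w$2 + w$1*axis \<mu> 1$2 + w$3*axis \<mu> 1$3 + w$4*axis \<mu> 1$4)
       /Gpp H x w - b*axis \<mu> 1$1/w$1)"
  unfolding dL_dxd_def by (rule DERIV_imp_deriv[OF dLag_dxd_dir[OF w1 G n]])

lemma dL_dx_eq:
  fixes x w :: "real^4" and b m n :: real and H :: "real \<Rightarrow> real \<Rightarrow> real \<Rightarrow> real"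
  assumes w1: "0 < w$1" and G: "0 < Gpp H x w" and n: "n \<noteq> 0"
    and DH: "(Hat H has_derivative DH) (at x)"
  shows "dL_dx b m H \<mu> x w n = ((w$1) powr (2*b) * (Gpp H x w) powr (1-b)/n)*(1-b)/(2*Gpp H x w)*(w$1)^2*DH (axis \<mu> 1)"
  unfolding dL_dx_def by (rule DERIV_imp_deriv[OF dLag_dx_dir[OF w1 G n DH]])

lemma dL_dx_2: "dL_dx b m H 2 x w n = 0"
proof -
  have "Hat H (x + s *\<^sub>R axis 2 1) = Hat H x" for s by (simp add: Hat_def axis_def)
  then have "(\<lambda>s. Lag b m H (x + s *\<^sub>R axis 2 1) w n) = (\<lambda>s. Lag b m H x w n)"
    by (simp add: Lag_def Gpp_def fun_eq_iff)
  then show ?thesis unfolding dL_dx_def by simp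
qed



lemma part1_alg:
  fixes b m N w1 G pv :: real
  assumes b: "0 < b" "b < 1" and m: "0 < m" and w1: "0 < w1" and G: "0 < G" and N: "0 < N"
    and Fn: "w1 powr (2*b) * G powr (1-b) = m^2 * N^2"
    and pv: "pv = (1-b) * w1 powr (1+2*b) * G powr (-b) / N"
  shows "G / w1^2 = ((1 - b)^2 * m^2 / pv^2) powr (1 / (1 + b))"
proof -
  obtain lw lg where lw: "w1 = exp lw" and lg: "G = exp lg" using w1 G by (metis exp_ln)
  have N2: "N^2 = exp (2*b*lw + (1-b)*lg) / m^2"
    using Fn m unfolding lw lg by (simp add: powr_def exp_add[symmetric] field_simps)
  have pv2: "pv^2 = (1-b)^2 * exp (2*(1+2*b)*lw - 2*b*lg) / N^2"
    unfolding pv lw lg by (simp add: powr_def power_divide power_mult_distrib exp_diff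
        flip: exp_of_nat_mult exp_add) (simp add: algebra_simps exp_minus field_simps)
  have pv3: "pv^2 = (1-b)^2 * m^2 * exp(2*(1+2*b)*lw - 2*b*lg) / exp(2*b*lw + (1-b)*lg)"
    unfolding pv2 N2 using m by simp
  have "(1 - b)^2 * m^2 / pv^2 = exp(2*b*lw + (1-b)*lg) / exp(2*(1+2*b)*lw - 2*b*lg)"
    unfolding pv3 using b m by (simp add: field_simps)
  also have "\<dots> = exp(2*b*lw + (1-b)*lg - (2*(1+2*b)*lw - 2*b*lg))" by (simp add: exp_diff)
  also have "\<dots> = exp ((1+b) * (lg - 2*lw))" by (rule arg_cong[of _ _ exp]) (simp add: algebra_simps)
  finally have "(1 - b)^2 * m^2 / pv^2 = exp ((1+b) * (lg - 2*lw))" .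
  moreover have "G / w1^2 = exp (lg - 2*lw)"
    unfolding lw lg by (simp add: exp_diff flip: exp_of_nat_mult)
  ultimately show ?thesis using b
    by (simp add: powr_def)
qed



lemma swap3:
  fixes f :: "4 \<Rightarrow> 4 \<Rightarrow> 4 \<Rightarrow> real"
  shows "(\<Sum>\<mu>\<in>UNIV. \<Sum>\<nu>\<in>UNIV. \<Sum>\<rho>\<in>UNIV. f \<mu> \<nu> \<rho>) = (\<Sum>\<rho>\<in>UNIV. \<Sum>\<mu>\<in>UNIV. \<Sum>\<nu>\<in>UNIV. f \<mu> \<nu> \<rho>)"
proof -
  have "(\<Sum>\<mu>\<in>UNIV. \<Sum>\<nu>\<in>UNIV. \<Sum>\<rho>\<in>UNIV. f \<mu> \<nu> \<rho>) = (\<Sum>\<mu>\<in>UNIV. \<Sum>\<rho>\<in>UNIV. \<Sum>\<nu>\<in>UNIV. f \<mu> \<nu> \<rho>)"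
    by (intro sum.cong refl sum.swap)
  also have "\<dots> = (\<Sum>\<rho>\<in>UNIV. \<Sum>\<mu>\<in>UNIV. \<Sum>\<nu>\<in>UNIV. f \<mu> \<nu> \<rho>)"
    by (rule sum.swap)
  finally show ?thesis .
qed

lemma partB:
  fixes d T :: "4 \<Rightarrow> 4 \<Rightarrow> real" and w :: "real^4"
  shows "(\<Sum>\<mu>\<in>UNIV. \<Sum>\<nu>\<in>UNIV. w$\<mu>*w$\<nu>*(\<Sum>\<rho>\<in>UNIV. T \<rho> \<nu> * d \<rho> \<mu>))
     = (\<Sum>\<rho>\<in>UNIV. (\<Sum>\<mu>\<in>UNIV. w$\<mu> * d \<rho> \<mu>) * (\<Sum>\<nu>\<in>UNIV. T \<rho> \<nu> * w$\<nu>))"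
proof -
  have "(\<Sum>\<mu>\<in>UNIV. \<Sum>\<nu>\<in>UNIV. w$\<mu>*w$\<nu>*(\<Sum>\<rho>\<in>UNIV. T \<rho> \<nu> * d \<rho> \<mu>))
     = (\<Sum>\<mu>\<in>UNIV. \<Sum>\<nu>\<in>UNIV. \<Sum>\<rho>\<in>UNIV. (w$\<mu> * d \<rho> \<mu>) * (T \<rho> \<nu> * w$\<nu>))"
    by (simp add: sum_distrib_left mult_ac)
  also have "\<dots> = (\<Sum>\<rho>\<in>UNIV. \<Sum>\<mu>\<in>UNIV. \<Sum>\<nu>\<in>UNIV. (w$\<mu> * d \<rho> \<mu>) * (T \<rho> \<nu> * w$\<nu>))"
    by (rule swap3)
  also have "\<dots> = (\<Sum>\<rho>\<in>UNIV. (\<Sum>\<mu>\<in>UNIV. w$\<mu> * d \<rho> \<mu>) * (\<Sum>\<nu>\<in>UNIV. T \<rho> \<nu> * w$\<nu>))"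
    by (simp add: sum_product)
  finally show ?thesis .
qed

lemma partA:
  fixes w :: "real^4" and Y h :: "4 \<Rightarrow> real"
  shows "(\<Sum>\<mu>\<in>UNIV. \<Sum>\<nu>\<in>UNIV. w$\<mu>*w$\<nu>*(\<Sum>\<rho>\<in>UNIV. Y \<rho> * (if \<mu>=1\<and>\<nu>=1 then h \<rho> else 0)))
     = (w$1)^2 * (\<Sum>\<rho>\<in>UNIV. Y \<rho> * h \<rho>)"
  by (simp add: sum_4 power2_eq_square)

lemma S_expand:
  fixes d T :: "4 \<Rightarrow> 4 \<Rightarrow> real" and w :: "real^4" and Y h :: "4 \<Rightarrow> real"
  shows "(\<Sum>\<mu>\<in>UNIV. \<Sum>\<nu>\<in>UNIV. w$\<mu>*w$\<nu>*((\<Sum>\<rho>\<in>UNIV. Y \<rho> * (if \<mu>=1\<and>\<nu>=1 then h \<rho> else 0)) + (\<Sum>\<rho>\<in>UNIV. T \<rho> \<nu> * d \<rho> \<mu>)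
        + (\<Sum>\<rho>\<in>UNIV. T \<mu> \<rho> * d \<rho> \<nu>)))
     = (w$1)^2 * (\<Sum>\<rho>\<in>UNIV. Y \<rho> * h \<rho>) + (\<Sum>\<rho>\<in>UNIV. (\<Sum>\<mu>\<in>UNIV. w$\<mu> * d \<rho> \<mu>) * ((\<Sum>\<nu>\<in>UNIV. T \<rho> \<nu> * w$\<nu>) + (\<Sum>\<nu>\<in>UNIV. T \<nu> \<rho> * w$\<nu>)))"
proof -
  have C: "(\<Sum>\<mu>\<in>UNIV. \<Sum>\<nu>\<in>UNIV. w$\<mu>*w$\<nu>*(\<Sum>\<rho>\<in>UNIV. T \<mu> \<rho> * d \<rho> \<nu>))
     = (\<Sum>\<rho>\<in>UNIV. (\<Sum>\<mu>\<in>UNIV. w$\<mu> * d \<rho> \<mu>) * (\<Sum>\<nu>\<in>UNIV. T \<nu> \<rho> * w$\<nu>))"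
    using partB[of w "\<lambda>a b. T b a" d] sum.swap[of "\<lambda>\<mu> \<nu>. w$\<mu>*w$\<nu>*(\<Sum>\<rho>\<in>UNIV. T \<mu> \<rho> * d \<rho> \<nu>)" UNIV UNIV]
    by (simp add: mult_ac)
  show ?thesis
    using partA[of w Y h] partB[of w T d] C
    by (simp add: algebra_simps sum.distrib)
qed

lemma ppg_sym: "ppg H x i j = ppg H x j i"
  using exhaust_4[of i] exhaust_4[of j] by (elim disjE) (simp_all add: ppg_vals)

lemma Kdu_sym: "Kdu x i j = Kdu x j i"
  by (auto simp: Kdu_def)

lemma T_sym: "ppg H x i j - c * Kdu x i j = ppg H x j i - c * Kdu x j i"
  using ppg_sym Kdu_sym by metis

lemma Tw_eq:
  fixes w x :: "real^4"
  shows "(\<Sum>\<rho>\<in>UNIV. (ppg H x \<mu> \<rho> - c*Kdu x \<mu> \<rho>) * w$\<rho>)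
   = (Hat H x*w$1*axis \<mu> 1$1 + axis \<mu> 1$1*w$2 + w$1*axis \<mu> 1$2 + w$3*axis \<mu> 1$3 + w$4*axis \<mu> 1$4)
     - c * w$1 * axis \<mu> 1$1"
  using exhaust_4[of \<mu>]
  by (elim disjE) (simp_all add: sum_4 ppg_vals Kdu_def axis_comps algebra_simps)

lemma P_eq:
  fixes w x :: "real^4"
  assumes w1: "w$1 \<noteq> 0" and G: "Gpp H x w \<noteq> 0" and N: "N \<noteq> 0" and b1: "b \<noteq> 1"
    and M2: "M2 = Gpp H x w/(w$1)^2"
  shows "(F/N)*((1-b)*
     (Hat H x*w$1*axis \<mu> 1$1 + axis \<mu> 1$1*w$2 + w$1*axis \<mu> 1$2 + w$3*axis \<mu> 1$3 + w$4*axis \<mu> 1$4)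
       /Gpp H x w - b*axis \<mu> 1$1/w$1)
    = 2 * ((F/N)*(1-b)/(2*Gpp H x w)) * (\<Sum>\<rho>\<in>UNIV. (ppg H x \<mu> \<rho> - b/(1-b)*M2*Kdu x \<mu> \<rho>) * w$\<rho>)"
proof -
  have b1': "1 - b \<noteq> 0" using b1 by simp
  define gg where "gg = Hat H x*w$1*axis \<mu> 1$1 + axis \<mu> 1$1*w$2 + w$1*axis \<mu> 1$2 + w$3*axis \<mu> 1$3 + w$4*axis \<mu> 1$4"
  define e where "e = axis \<mu> (1::real) $ (1::4)"
  have "(\<Sum>\<rho>\<in>UNIV. (ppg H x \<mu> \<rho> - b/(1-b)*M2*Kdu x \<mu> \<rho>) * w$\<rho>) = gg - b/(1-b)*M2 * w$1 * e"
    unfolding gg_def e_def by (rule Tw_eq)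
  moreover have "(F/N)*((1-b)*gg/Gpp H x w - b*e/w$1) = 2 * ((F/N)*(1-b)/(2*Gpp H x w)) * (gg - b/(1-b)*M2 * w$1 * e)"
    unfolding M2 using w1 G N b1' by (simp add: field_simps power2_eq_square)
  ultimately show ?thesis unfolding gg_def e_def by simp
qed



lemma lin_expand:
  fixes DU :: "real^4 \<Rightarrow> real^4"
  assumes l: "linear DU"
  shows "DU w $ \<mu> = (\<Sum>\<nu>\<in>UNIV. w$\<nu> * DU (axis \<nu> 1) $ \<mu>)"
proof -
  have "w = (\<Sum>\<nu>\<in>UNIV. w$\<nu> *\<^sub>R axis \<nu> 1)"
    using basis_expansion[of w] by (simp add: scalar_mult_eq_scaleR)
  then have "DU w = (\<Sum>\<nu>\<in>UNIV. w$\<nu> *\<^sub>R DU (axis \<nu> 1))"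
    using linear_sum[OF l] linear_scale[OF l] by (metis (no_types, lifting) sum.cong)
  then show ?thesis by simp
qed

lemma key_alg:
  fixes d :: "4 \<Rightarrow> 4 \<Rightarrow> real" and Y h :: "4 \<Rightarrow> real" and w x :: "real^4"
  assumes w1: "w$1 \<noteq> 0" and G: "Gpp H x w \<noteq> 0" and N: "N \<noteq> 0" and b1: "b \<noteq> 1"
    and M2: "M2 = Gpp H x w/(w$1)^2"
    and lie: "\<And>\<mu> \<nu>. (\<Sum>\<rho>\<in>UNIV. Y \<rho> * (if \<mu>=1\<and>\<nu>=1 then h \<rho> else 0))
        + (\<Sum>\<rho>\<in>UNIV. (ppg H x \<rho> \<nu> - b/(1-b)*M2*Kdu x \<rho> \<nu>) * d \<rho> \<mu>)
        + (\<Sum>\<rho>\<in>UNIV. (ppg H x \<mu> \<rho> - b/(1-b)*M2*Kdu x \<mu> \<rho>) * d \<rho> \<nu>) = 2*Om*(ppg H x \<mu> \<nu> + M2*Kdu x \<mu> \<nu>)"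
  shows "(\<Sum>\<mu>\<in>UNIV. (\<Sum>\<nu>\<in>UNIV. w$\<nu> * d \<mu> \<nu>) * ((F/N)*((1-b)*
     (Hat H x*w$1*axis \<mu> 1$1 + axis \<mu> 1$1*w$2 + w$1*axis \<mu> 1$2 + w$3*axis \<mu> 1$3 + w$4*axis \<mu> 1$4)
       /Gpp H x w - b*axis \<mu> 1$1/w$1))
     + Y \<mu> * ((F/N)*(1-b)/(2*Gpp H x w)*(w$1)^2*h \<mu>)) = 0"
proof -
  let ?k = "(F/N)*(1-b)/(2*Gpp H x w)"
  let ?T = "\<lambda>i j. ppg H x i j - b/(1-b)*M2*Kdu x i j"
  define tw where "tw \<rho> = (\<Sum>\<nu>\<in>UNIV. ?T \<rho> \<nu> * w$\<nu>)" for \<rho>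
  define dw where "dw \<rho> = (\<Sum>\<mu>\<in>UNIV. w$\<mu> * d \<rho> \<mu>)" for \<rho>
  let ?L = "\<lambda>\<mu> \<nu>. (\<Sum>\<rho>\<in>UNIV. Y \<rho> * (if \<mu>=1\<and>\<nu>=1 then h \<rho> else 0)) + (\<Sum>\<rho>\<in>UNIV. ?T \<rho> \<nu> * d \<rho> \<mu>)
        + (\<Sum>\<rho>\<in>UNIV. ?T \<mu> \<rho> * d \<rho> \<nu>)"
  have "(\<Sum>\<mu>\<in>UNIV. \<Sum>\<nu>\<in>UNIV. w$\<mu>*w$\<nu>*?L \<mu> \<nu>) = (\<Sum>\<mu>\<in>UNIV. \<Sum>\<nu>\<in>UNIV. w$\<mu>*w$\<nu>*(2*Om*(ppg H x \<mu> \<nu> + M2*Kdu x \<mu> \<nu>)))"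
    using lie by simp
  also have "\<dots> = 0"
    using w1 unfolding M2 by (simp add: sum_4 ppg_vals Kdu_def Gpp_def field_simps power2_eq_square)
  finally have S0: "(\<Sum>\<mu>\<in>UNIV. \<Sum>\<nu>\<in>UNIV. w$\<mu>*w$\<nu>*?L \<mu> \<nu>) = 0" .
  have sym: "(\<Sum>\<nu>\<in>UNIV. ?T \<nu> \<rho> * w$\<nu>) = tw \<rho>" for \<rho>
    unfolding tw_def by (intro sum.cong refl) (metis T_sym)
  have SE: "(\<Sum>\<mu>\<in>UNIV. \<Sum>\<nu>\<in>UNIV. w$\<mu>*w$\<nu>*?L \<mu> \<nu>) = (w$1)^2 * (\<Sum>\<rho>\<in>UNIV. Y \<rho> * h \<rho>) + (\<Sum>\<rho>\<in>UNIV. dw \<rho> * (tw \<rho> + tw \<rho>))"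
    using S_expand[of w Y h ?T d] unfolding sym dw_def tw_def by simp
  have Peq: "(F/N)*((1-b)*
     (Hat H x*w$1*axis \<mu> 1$1 + axis \<mu> 1$1*w$2 + w$1*axis \<mu> 1$2 + w$3*axis \<mu> 1$3 + w$4*axis \<mu> 1$4)
       /Gpp H x w - b*axis \<mu> 1$1/w$1) = 2 * ?k * tw \<mu>" for \<mu>
    unfolding tw_def by (rule P_eq[OF w1 G N b1 M2])
  have dweq: "(\<Sum>\<nu>\<in>UNIV. w$\<nu> * d \<mu> \<nu>) = dw \<mu>" for \<mu> unfolding dw_def by simp
  have "(\<Sum>\<mu>\<in>UNIV. (\<Sum>\<nu>\<in>UNIV. w$\<nu> * d \<mu> \<nu>) * ((F/N)*((1-b)*
     (Hat H x*w$1*axis \<mu> 1$1 + axis \<mu> 1$1*w$2 + w$1*axis \<mu> 1$2 + w$3*axis \<mu> 1$3 + w$4*axis \<mu> 1$4)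
       /Gpp H x w - b*axis \<mu> 1$1/w$1))
     + Y \<mu> * (?k*(w$1)^2*h \<mu>)) = (\<Sum>\<mu>\<in>UNIV. dw \<mu> * (2 * ?k * tw \<mu>) + Y \<mu> * (?k*(w$1)^2*h \<mu>))"
    unfolding Peq dweq ..
  also have "\<dots> = ?k * ((w$1)^2 * (\<Sum>\<rho>\<in>UNIV. Y \<rho> * h \<rho>) + (\<Sum>\<rho>\<in>UNIV. dw \<rho> * (tw \<rho> + tw \<rho>)))"
    by (simp add: sum_4 algebra_simps)
  also have "\<dots> = 0" using S0 SE by simp
  finally show ?thesis .
qed



theorem mainTheorem7:
  fixes b m :: real
    and H :: "real \<Rightarrow> real \<Rightarrow> real \<Rightarrow> real"
    and J :: "real set"
    and \<gamma> gd :: "real \<Rightarrow> real^4"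
    and n :: "real \<Rightarrow> real"
  assumes b: "0 < b" "b < 1"
    and m: "0 < m"
    and H_diff: "\<forall>y. Hat H differentiable (at y)"
    and J: "open J" "is_interval J" "J \<noteq> {}"
    and sol: "EL_solution b m H J \<gamma> gd n"
    and n_pos: "\<forall>t\<in>J. 0 < n t"
    and udot_pos: "\<forall>t\<in>J. 0 < gd t $ 1"
    and G_pos: "\<forall>t\<in>J. 0 < Gpp H (\<gamma> t) (gd t)"
  shows "\<exists>\<pi>v>0.
     (\<forall>t\<in>J. dL_dxd b m H 2 (\<gamma> t) (gd t) (n t) = \<pi>v
            \<and> dL_dxd b m H 2 (\<gamma> t) (gd t) (n t)
                = (1 - b) * (gd t $ 1) powr (1 + 2 * b) * (Gpp H (\<gamma> t) (gd t)) powr (- b) / n t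
            \<and> Gpp H (\<gamma> t) (gd t) / (gd t $ 1)^2
                = ((1 - b)^2 * m^2 / \<pi>v^2) powr (1 / (1 + b))) \<and>
     (\<forall>(\<Upsilon> :: real^4 \<Rightarrow> real^4) (\<Omega> :: real^4 \<Rightarrow> real).
        let M2 = ((1 - b)^2 * m^2 / \<pi>v^2) powr (1 / (1 + b)) in
        (\<forall>y. \<Upsilon> differentiable (at y)) \<and>
        (\<forall>y \<mu> \<nu>. lie2 \<Upsilon> (\<lambda>z i j. ppg H z i j - b / (1 - b) * M2 * Kdu z i j) y \<mu> \<nu>
                  = 2 * \<Omega> y * (ppg H y \<mu> \<nu> + M2 * Kdu y \<mu> \<nu>))
        \<longrightarrow> (\<exists>C. \<forall>t\<in>J. (\<Sum>\<mu>\<in>UNIV. \<Upsilon> (\<gamma> t) $ \<mu> * dL_dxd b m H \<mu> (\<gamma> t) (gd t) (n t)) = C))"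
proof -
  from sol have hv: "\<And>t. t \<in> J \<Longrightarrow> (\<gamma> has_vector_derivative gd t) (at t)"
    and el: "\<And>t \<mu>. t \<in> J \<Longrightarrow> ((\<lambda>s. dL_dxd b m H \<mu> (\<gamma> s) (gd s) (n s))
                   has_real_derivative dL_dx b m H \<mu> (\<gamma> t) (gd t) (n t)) (at t)"
    and en: "\<And>t. t \<in> J \<Longrightarrow> dL_dn b m H (\<gamma> t) (gd t) (n t) = 0"
    unfolding EL_solution_def by auto
  have cvx: "convex J" using J(2) is_interval_convex by blast
  define pv where "pv t = dL_dxd b m H 2 (\<gamma> t) (gd t) (n t)" for t
  have pvf: "pv t = (1 - b) * (gd t $ 1) powr (1 + 2 * b) * (Gpp H (\<gamma> t) (gd t)) powr (- b) / n t"
    if t: "t \<in> J" for t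
  proof -
    have w1: "0 < gd t $ 1" and G: "0 < Gpp H (\<gamma> t) (gd t)" and N: "0 < n t"
      using t udot_pos G_pos n_pos by auto
    have N': "n t \<noteq> 0" using N by simp
    have a: "(gd t $ 1) powr (1 + 2 * b) = gd t $ 1 * (gd t $ 1) powr (2*b)"
      using w1 by (simp add: powr_add)
    have c: "(Gpp H (\<gamma> t) (gd t)) powr (- b) = (Gpp H (\<gamma> t) (gd t)) powr (1-b) / Gpp H (\<gamma> t) (gd t)"
      using powr_m1[OF G, of "1-b"] by simp
    show ?thesis
      unfolding pv_def dL_dxd_eq[OF w1 G N'] a c using N G w1
      by (simp add: axis_comps field_simps)
  qed
  have "\<exists>c. \<forall>t\<in>J. pv t = c"
  proof (rule has_field_derivative_zero_constant[OF cvx])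
    fix t assume t: "t \<in> J"
    have "(pv has_real_derivative 0) (at t)"
      using el[OF t, of 2] unfolding dL_dx_2 pv_def .
    then show "(pv has_real_derivative 0) (at t within J)"
      by (rule has_field_derivative_at_within)
  qed
  then obtain c where c: "\<And>t. t \<in> J \<Longrightarrow> pv t = c" by blast
  obtain t0 where t0: "t0 \<in> J" using J(3) by blast
  have cpos: "0 < c"
  proof -
    have "0 < (1 - b) * (gd t0 $ 1) powr (1 + 2 * b) * (Gpp H (\<gamma> t0) (gd t0)) powr (- b) / n t0"
      using t0 udot_pos G_pos n_pos b by (intro divide_pos_pos mult_pos_pos) auto
    then show ?thesis using pvf[OF t0] c[OF t0] by simp
  qed
  have M2t: "Gpp H (\<gamma> t) (gd t) / (gd t $ 1)^2 = ((1 - b)^2 * m^2 / c^2) powr (1 / (1 + b))"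
    if t: "t \<in> J" for t
  proof -
    have w1: "0 < gd t $ 1" and G: "0 < Gpp H (\<gamma> t) (gd t)" and N: "0 < n t"
      using t udot_pos G_pos n_pos by auto
    have "(gd t $ 1) powr (2*b) * (Gpp H (\<gamma> t) (gd t)) powr (1-b) / (2 * (n t)^2) - m^2/2 = 0"
      using en[OF t] dLag_dn[of "n t" b m H "\<gamma> t" "gd t"] N by simp
    then have Fn: "(gd t $ 1) powr (2*b) * (Gpp H (\<gamma> t) (gd t)) powr (1-b) = m^2 * (n t)^2"
      using N by (simp add: field_simps)
    show ?thesis
      by (rule part1_alg[OF b m w1 G N Fn]) (use pvf[OF t] c[OF t] in simp)
  qed
  show ?thesis unfolding Let_def
  proof (rule exI[of _ c], intro conjI cpos ballI allI impI)
    fix t assume "t \<in> J"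
    then show "dL_dxd b m H 2 (\<gamma> t) (gd t) (n t) = c" using c unfolding pv_def by auto
  next
    fix t assume "t \<in> J"
    then show "dL_dxd b m H 2 (\<gamma> t) (gd t) (n t)
                = (1 - b) * (gd t $ 1) powr (1 + 2 * b) * (Gpp H (\<gamma> t) (gd t)) powr (- b) / n t"
      using pvf unfolding pv_def by auto
  next
    fix t assume "t \<in> J"
    then show "Gpp H (\<gamma> t) (gd t) / (gd t $ 1)^2
                = ((1 - b)^2 * m^2 / c^2) powr (1 / (1 + b))" using M2t by auto
  next
    fix \<Upsilon> :: "real^4 \<Rightarrow> real^4" and \<Omega> :: "real^4 \<Rightarrow> real"
    assume hyp: "(\<forall>y. \<Upsilon> differentiable (at y)) \<and>
        (\<forall>y \<mu> \<nu>. lie2 \<Upsilon> (\<lambda>z i j. ppg H z i j - b / (1 - b) * ((1 - b)^2 * m^2 / c^2) powr (1 / (1 + b)) * Kdu z i j) y \<mu> \<nu>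
                  = 2 * \<Omega> y * (ppg H y \<mu> \<nu> + ((1 - b)^2 * m^2 / c^2) powr (1 / (1 + b)) * Kdu y \<mu> \<nu>))"
    define M2 where "M2 = ((1 - b)^2 * m^2 / c^2) powr (1 / (1 + b))"
    from hyp have Ud: "\<And>y. \<Upsilon> differentiable (at y)"
      and lie: "\<And>y \<mu> \<nu>. lie2 \<Upsilon> (\<lambda>z i j. ppg H z i j - b / (1 - b) * M2 * Kdu z i j) y \<mu> \<nu>
                  = 2 * \<Omega> y * (ppg H y \<mu> \<nu> + M2 * Kdu y \<mu> \<nu>)"
      unfolding M2_def by auto
    let ?I = "\<lambda>s. (\<Sum>\<mu>\<in>UNIV. \<Upsilon> (\<gamma> s) $ \<mu> * dL_dxd b m H \<mu> (\<gamma> s) (gd s) (n s))"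
    show "\<exists>C. \<forall>t\<in>J. ?I t = C"
    proof (rule has_field_derivative_zero_constant[OF cvx])
      fix t assume t: "t \<in> J"
      have w1: "0 < gd t $ 1" and G: "0 < Gpp H (\<gamma> t) (gd t)" and N: "0 < n t"
        using t udot_pos G_pos n_pos by auto
      have N': "n t \<noteq> 0" using N by simp
      obtain DU where DU: "(\<Upsilon> has_derivative DU) (at (\<gamma> t))"
        using Ud unfolding differentiable_def by blast
      obtain DH where DH: "(Hat H has_derivative DH) (at (\<gamma> t))"
        using H_diff unfolding differentiable_def by blast
      have lDU: "linear DU" using DU has_derivative_linear by blast
      have D: "(?I has_real_derivative
          (\<Sum>\<mu>\<in>UNIV. DU (gd t) $ \<mu> * dL_dxd b m H \<mu> (\<gamma> t) (gd t) (n t)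
             + \<Upsilon> (\<gamma> t) $ \<mu> * dL_dx b m H \<mu> (\<gamma> t) (gd t) (n t))) (at t)"
      proof (rule DERIV_sum)
        fix \<mu> :: 4
        show "((\<lambda>s. \<Upsilon> (\<gamma> s) $ \<mu> * dL_dxd b m H \<mu> (\<gamma> s) (gd s) (n s)) has_real_derivative
           DU (gd t) $ \<mu> * dL_dxd b m H \<mu> (\<gamma> t) (gd t) (n t)
             + \<Upsilon> (\<gamma> t) $ \<mu> * dL_dx b m H \<mu> (\<gamma> t) (gd t) (n t)) (at t)"
          using DERIV_mult[OF vec_comp_deriv[OF chain_vec[OF hv[OF t] DU], of \<mu>] el[OF t, of \<mu>]]
          by (simp only: mult.commute[of "dL_dx b m H \<mu> (\<gamma> t) (gd t) (n t)"])
      qed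
      have M2e: "M2 = Gpp H (\<gamma> t) (gd t) / (gd t $ 1)^2" using M2t[OF t] unfolding M2_def by simp
      have lie': "(\<Sum>\<rho>\<in>UNIV. \<Upsilon> (\<gamma> t) $ \<rho> * (if \<mu>=1\<and>\<nu>=1 then DH (axis \<rho> 1) else 0))
        + (\<Sum>\<rho>\<in>UNIV. (ppg H (\<gamma> t) \<rho> \<nu> - b/(1-b)*M2*Kdu (\<gamma> t) \<rho> \<nu>) * DU (axis \<mu> 1) $ \<rho>)
        + (\<Sum>\<rho>\<in>UNIV. (ppg H (\<gamma> t) \<mu> \<rho> - b/(1-b)*M2*Kdu (\<gamma> t) \<mu> \<rho>) * DU (axis \<nu> 1) $ \<rho>)
        = 2*\<Omega> (\<gamma> t)*(ppg H (\<gamma> t) \<mu> \<nu> + M2*Kdu (\<gamma> t) \<mu> \<nu>)" for \<mu> \<nu>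
        using lie[of "\<gamma> t" \<mu> \<nu>] unfolding lie2_def pd_Hat[OF DH] pd_Y[OF DU] .
      have "(\<Sum>\<mu>\<in>UNIV. DU (gd t) $ \<mu> * dL_dxd b m H \<mu> (\<gamma> t) (gd t) (n t)
             + \<Upsilon> (\<gamma> t) $ \<mu> * dL_dx b m H \<mu> (\<gamma> t) (gd t) (n t)) = 0"
        unfolding lin_expand[OF lDU, of "gd t"] dL_dxd_eq[OF w1 G N'] dL_dx_eq[OF w1 G N' DH]
        apply (rule key_alg[where d="\<lambda>\<rho> \<mu>. DU (axis \<mu> 1) $ \<rho>" and Om="\<Omega> (\<gamma> t)"
              and Y="\<lambda>\<mu>. \<Upsilon> (\<gamma> t) $ \<mu>" and h="\<lambda>\<rho>. DH (axis \<rho> 1)"])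
        using w1 apply simp
        using G apply simp
        using N apply simp
        using b apply simp
         apply (rule M2e)
        apply (rule lie')
        done
      with D have "(?I has_real_derivative 0) (at t)" by simp
      then show "(?I has_real_derivative 0) (at t within J)"
        by (rule has_field_derivative_at_within)
    qed
  qed
qed


end
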